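(* Let $n\ge2$, $l\ge1$, $a_1,\ldots,a_l\ge2$ be integers with $a_1+\cdots+a_l=n$, and let \[\mathcal F(w,q)=\sum_{d=0}^{\infty}q^d\frac{\prod_{k=1}^l\prod_{r=1}^{a_kd}(a_kw+r)}{\prod_{r=1}^d\left[(w+r)^n-w^n\right]}.\] Then $\mathbf M^n\mathcal F=\mathcal F$.
   Context: $\mathcal P\subset1+q\,\mathbb Q(w)[[q]]$ denotes the set of power series in $q$ with constant term $1$ whose coefficients are rational functions of $w$ regular at $w=0$; $\mathcal F\in\mathcal P$. The map $\mathbf M:\mathcal P\to\mathcal P$ is $\mathbf MF(w,q)=\left\{1+\frac{q}{w}\frac{d}{dq}\right\}\frac{F(w,q)}{F(0,q)}$. *)

theory Defs
  imports "HOL-Computational_Algebra.Polynomial" "HOL-Computational_Algebra.Fraction_Field"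
          "HOL-Computational_Algebra.Formal_Power_Series"
begin

text \<open>Coefficient field Q(w) is modelled as rat poly fract (w = the polynomial variable).\<close>

definition wvar :: "rat poly fract" where
  "wvar = Fract [:0, 1:] 1"

definition const_fr :: "rat \<Rightarrow> rat poly fract" where
  "const_fr c = Fract [:c:] 1"

definition regular0 :: "rat poly fract \<Rightarrow> bool" where
  "regular0 x \<longleftrightarrow> (\<exists>p q. poly q 0 \<noteq> 0 \<and> x = Fract p q)"

definition eval0 :: "rat poly fract \<Rightarrow> rat" where
  "eval0 x = (THE c. \<exists>p q. poly q 0 \<noteq> 0 \<and> x = Fract p q \<and> c = poly p 0 / poly q 0)"

definition Pset :: "rat poly fract fps set" where
  "Pset = {F. fps_nth F 0 = 1 \<and> (\<forall>d. regular0 (fps_nth F d))}"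

definition at0 :: "rat poly fract fps \<Rightarrow> rat poly fract fps" where
  "at0 F = Abs_fps (\<lambda>d. const_fr (eval0 (fps_nth F d)))"

definition Mop :: "rat poly fract fps \<Rightarrow> rat poly fract fps" where
  "Mop F = (let G = F * inverse (at0 F)
            in G + fps_const (inverse wvar) * (fps_X * fps_deriv G))"

definition calF :: "nat \<Rightarrow> (nat \<Rightarrow> nat) \<Rightarrow> nat \<Rightarrow> rat poly fract fps" where
  "calF l a n = Abs_fps (\<lambda>d.
     Fract (\<Prod>k=1..l. \<Prod>r=1..a k * d. [:of_nat r, of_nat (a k):])
           (\<Prod>r=1..d. [:of_nat r, 1:] ^ n - [:0, 1:] ^ n))"

end

theory Submission
  imports Defs
begin

unbundle fps_syntax


definition emb :: "rat poly \<Rightarrow> rat poly fract" where "emb p = Fract p 1"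

lemma emb_add: "emb (p + q) = emb p + emb q" by (simp add: emb_def)
lemma emb_mult: "emb (p * q) = emb p * emb q" by (simp add: emb_def)
lemma emb_0[simp]: "emb 0 = 0" by (simp add: emb_def fract_collapse)
lemma emb_1[simp]: "emb 1 = 1" by (simp add: emb_def fract_collapse)
lemma emb_minus: "emb (- p) = - emb p" by (simp add: emb_def)
lemma emb_diff: "emb (p - q) = emb p - emb q" by (simp add: emb_def)
lemma emb_power: "emb (p ^ k) = emb p ^ k" by (induct k) (auto simp: emb_mult)
lemma emb_of_nat[simp]: "emb (of_nat k) = of_nat k" by (simp add: emb_def of_nat_fract)
lemmas emb_hom = emb_add emb_mult emb_minus emb_diff emb_power emb_0 emb_1 emb_of_nat
lemma emb_prod: "emb (prod f A) = (\<Prod>x\<in>A. emb (f x))"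
  by (induct A rule: infinite_finite_induct) (auto simp: emb_hom)
lemma emb_sum: "emb (sum f A) = (\<Sum>x\<in>A. emb (f x))"
  by (induct A rule: infinite_finite_induct) (auto simp: emb_hom)
lemma emb_eq_iff[simp]: "emb p = emb q \<longleftrightarrow> p = q" by (simp add: emb_def eq_fract)
lemma emb_eq_0_iff[simp]: "emb p = 0 \<longleftrightarrow> p = 0" using emb_eq_iff[of p 0] by simp

lemma Fract_emb: "Fract p q = emb p / emb q"
proof (cases "q = 0")
  case True thus ?thesis by (simp add: fract_collapse)
next
  case False thus ?thesis by (simp add: emb_def divide_inverse eq_fract)
qed

lemma wvar_emb: "wvar = emb [:0,1:]" by (simp add: wvar_def emb_def)
lemma const_fr_emb: "const_fr c = emb [:c:]" by (simp add: const_fr_def emb_def)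

lemma regular0_iff: "regular0 x \<longleftrightarrow> (\<exists>p q. poly q 0 \<noteq> 0 \<and> x = emb p / emb q)"
  by (simp add: regular0_def Fract_emb)

lemma eval0_eq: assumes "poly q 0 \<noteq> 0" shows "eval0 (emb p / emb q) = poly p 0 / poly q 0"
proof -
  have q0: "q \<noteq> 0" using assms by auto
  show ?thesis unfolding eval0_def
  proof (rule the_equality)
    show "\<exists>p' q'. poly q' 0 \<noteq> 0 \<and> emb p / emb q = Fract p' q' \<and> poly p 0 / poly q 0 = poly p' 0 / poly q' 0"
      using assms by (auto simp: Fract_emb)
  next
    fix c assume "\<exists>p' q'. poly q' 0 \<noteq> 0 \<and> emb p / emb q = Fract p' q' \<and> c = poly p' 0 / poly q' 0"
    then obtain p' q' where h: "poly q' 0 \<noteq> 0" "emb p / emb q = emb p' / emb q'" "c = poly p' 0 / poly q' 0"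
      by (auto simp: Fract_emb)
    have q0': "q' \<noteq> 0" using h by auto
    from h(2) have "emb (p * q') = emb (p' * q)" using q0 q0' by (simp add: field_simps emb_hom)
    hence "p * q' = p' * q" by (simp only: emb_eq_iff)
    hence e1: "poly p 0 * poly q' 0 = poly p' 0 * poly q 0" by (metis poly_mult)
    have e2: "c * poly q' 0 = poly p' 0" using h by (simp add: field_simps)
    have "c * poly q 0 * poly q' 0 = poly p 0 * poly q' 0" using e1 e2
      by (metis mult.assoc mult.commute)
    hence "c * poly q 0 = poly p 0" using h(1) by simp
    thus "c = poly p 0 / poly q 0" using assms by (simp add: field_simps)
  qed
qed

lemma regular0_emb[simp]: "regular0 (emb p)"
  unfolding regular0_iff by (rule exI[of _ p], rule exI[of _ 1]) simp
lemma eval0_emb[simp]: "eval0 (emb p) = poly p 0"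
  using eval0_eq[of 1 p] by simp

lemma regular0_add: "regular0 x \<Longrightarrow> regular0 y \<Longrightarrow> regular0 (x + y) \<and> eval0 (x + y) = eval0 x + eval0 y"
proof -
  assume "regular0 x" "regular0 y"
  then obtain p q p' q' where h: "poly q 0 \<noteq> 0" "x = emb p / emb q" "poly q' 0 \<noteq> 0" "y = emb p' / emb q'"
    unfolding regular0_iff by blast
  hence nz: "q \<noteq> 0" "q' \<noteq> 0" by auto
  have e: "x + y = emb (p * q' + p' * q) / emb (q * q')" using h nz by (simp add: field_simps emb_hom)
  have pq: "poly (q * q') 0 \<noteq> 0" using h by simp
  have r: "regular0 (x+y)" unfolding e regular0_iff using pq by blast
  have "eval0 (x+y) = poly (p * q' + p' * q) 0 / poly (q * q') 0" unfolding e by (rule eval0_eq[OF pq])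
  also have "\<dots> = poly p 0 / poly q 0 + poly p' 0 / poly q' 0" using h by (simp add: add_frac_eq)
  finally show ?thesis using r h eval0_eq[of q p] eval0_eq[of q' p'] by auto
qed

lemma regular0_mult: "regular0 x \<Longrightarrow> regular0 y \<Longrightarrow> regular0 (x * y) \<and> eval0 (x * y) = eval0 x * eval0 y"
proof -
  assume "regular0 x" "regular0 y"
  then obtain p q p' q' where h: "poly q 0 \<noteq> 0" "x = emb p / emb q" "poly q' 0 \<noteq> 0" "y = emb p' / emb q'"
    unfolding regular0_iff by blast
  hence nz: "q \<noteq> 0" "q' \<noteq> 0" by auto
  have e: "x * y = emb (p * p') / emb (q * q')" unfolding h by (simp add: emb_hom)
  have pq: "poly (q * q') 0 \<noteq> 0" using h by simp
  have r: "regular0 (x*y)" unfolding e regular0_iff using pq by blast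
  have "eval0 (x*y) = poly (p * p') 0 / poly (q * q') 0" unfolding e by (rule eval0_eq[OF pq])
  also have "\<dots> = poly p 0 / poly q 0 * (poly p' 0 / poly q' 0)" by simp
  finally show ?thesis using r h eval0_eq[of q p] eval0_eq[of q' p'] by auto
qed

lemma regular0_minus: "regular0 x \<Longrightarrow> regular0 (- x) \<and> eval0 (- x) = - eval0 x"
proof -
  assume x: "regular0 x"
  have "- x = emb (-1) * x" by (simp add: emb_hom)
  thus ?thesis using regular0_mult[OF regular0_emb[of "-1"] x] by simp
qed

lemma regular0_inverse: "regular0 x \<Longrightarrow> eval0 x \<noteq> 0 \<Longrightarrow> regular0 (inverse x) \<and> eval0 (inverse x) = inverse (eval0 x)"
proof -
  assume a: "regular0 x" "eval0 x \<noteq> 0"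
  then obtain p q where h: "poly q 0 \<noteq> 0" "x = emb p / emb q" unfolding regular0_iff by blast
  have "poly p 0 \<noteq> 0" using a h eval0_eq by auto
  moreover have "inverse x = emb q / emb p" using h by simp
  ultimately show ?thesis using h eval0_eq[of p q] eval0_eq[of q p] by (auto simp: regular0_iff)
qed

lemma regular0_divw: "regular0 x \<Longrightarrow> eval0 x = 0 \<Longrightarrow> regular0 (inverse wvar * x)"
proof -
  assume a: "regular0 x" "eval0 x = 0"
  then obtain p q where h: "poly q 0 \<noteq> 0" "x = emb p / emb q" unfolding regular0_iff by blast
  have "poly p 0 = 0" using a h eval0_eq by auto
  then obtain s where s: "p = [:0,1:] * s" using poly_eq_0_iff_dvd[of p 0] by (auto elim: dvdE)
  have ps: "emb p = emb [:0,1:] * emb s" using s by (simp only: emb_mult)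
  have "inverse wvar * x = emb s / emb q" unfolding h(2) ps wvar_emb by simp
  thus ?thesis using h unfolding regular0_iff by blast
qed

lemma regular0_sum: "(\<And>i. i \<in> A \<Longrightarrow> regular0 (f i)) \<Longrightarrow> regular0 (sum f A) \<and> eval0 (sum f A) = (\<Sum>i\<in>A. eval0 (f i))"
proof (induct A rule: infinite_finite_induct)
  case (insert x F) thus ?case using regular0_add[of "f x" "sum f F"] by auto
qed (auto simp: emb_0[symmetric] simp del: emb_0)

lemma regular0_wvar[simp]: "regular0 wvar" and eval0_wvar[simp]: "eval0 wvar = 0"
  by (simp_all add: wvar_emb)
lemma regular0_const[simp]: "regular0 (const_fr c)" and eval0_const[simp]: "eval0 (const_fr c) = c"
  by (simp_all add: const_fr_emb)
lemma regular0_of_nat[simp]: "regular0 (of_nat k)" and eval0_of_nat[simp]: "eval0 (of_nat k) = of_nat k"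
  using regular0_emb[of "of_nat k"] eval0_emb[of "of_nat k"] by (simp_all del: regular0_emb eval0_emb)
lemma regular0_1[simp]: "regular0 1" and eval0_1[simp]: "eval0 1 = 1"
  using regular0_emb[of 1] eval0_emb[of 1] by (simp_all del: regular0_emb eval0_emb)
lemma regular0_0[simp]: "regular0 0" and eval0_0[simp]: "eval0 0 = 0"
  using regular0_emb[of 0] eval0_emb[of 0] by (simp_all del: regular0_emb eval0_emb)

lemma const_fr_hom: "const_fr (a + b) = const_fr a + const_fr b" "const_fr (a * b) = const_fr a * const_fr b"
  "const_fr 0 = 0" "const_fr 1 = 1" "const_fr (- a) = - const_fr a" "const_fr (of_nat k) = of_nat k"
  by (simp_all add: const_fr_emb flip: emb_add emb_mult emb_minus emb_of_nat del: emb_add emb_mult emb_minus emb_of_nat)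
     (simp_all add: of_nat_poly one_pCons[symmetric])


type_synonym ser = "rat poly fract fps"

definition cf :: "rat fps \<Rightarrow> ser" where "cf f = Abs_fps (\<lambda>d. const_fr (f $ d))"
definition ev :: "ser \<Rightarrow> rat fps" where "ev F = Abs_fps (\<lambda>d. eval0 (F $ d))"
definition reg :: "ser \<Rightarrow> bool" where "reg F \<longleftrightarrow> (\<forall>d. regular0 (F $ d))"
definition th :: "ser \<Rightarrow> ser" where "th X = fps_const wvar * X + fps_X * fps_deriv X"

lemma cf_nth[simp]: "cf f $  d = const_fr (f $ d)" by (simp add: cf_def)
lemma ev_nth[simp]: "ev F $  d = eval0 (F $ d)" by (simp add: ev_def)

lemma const_fr_sum: "const_fr (sum f A) = (\<Sum>x\<in>A. const_fr (f x))"
  by (induct A rule: infinite_finite_induct) (auto simp: const_fr_hom)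

lemma cf_add[simp]: "cf (f + g) = cf f + cf g" by (rule fps_ext) (simp add: const_fr_hom)
lemma cf_mult[simp]: "cf (f * g) = cf f * cf g"
  by (rule fps_ext) (simp add: fps_mult_nth const_fr_sum const_fr_hom)
lemma cf_0[simp]: "cf 0 = 0" by (rule fps_ext) (simp add: const_fr_hom)
lemma cf_1[simp]: "cf 1 = 1" by (rule fps_ext) (simp add: const_fr_hom)
lemma cf_minus[simp]: "cf (- f) = - cf f" by (rule fps_ext) (simp add: const_fr_hom)
lemma cf_X[simp]: "cf fps_X = fps_X" by (rule fps_ext) (simp add: const_fr_hom fps_X_def)
lemma cf_const[simp]: "cf (fps_const c) = fps_const (const_fr c)" by (rule fps_ext) (simp add: const_fr_hom)
lemma cf_deriv[simp]: "cf (fps_deriv f) = fps_deriv (cf f)"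
  by (rule fps_ext) (simp add: const_fr_hom del: of_nat_Suc)
lemma const_fr_inj[simp]: "const_fr a = const_fr b \<longleftrightarrow> a = b" by (simp add: const_fr_emb)
lemma const_fr_eq0[simp]: "const_fr a = 0 \<longleftrightarrow> a = 0" using const_fr_inj[of a 0] by (simp add: const_fr_hom)
lemma cf_inj: "cf f = cf g \<Longrightarrow> f = g"
  by (metis cf_nth const_fr_inj fps_ext)
lemma cf_inverse: "cf (inverse f) = inverse (cf f)"
proof (cases "f $ 0 = 0")
  case True
  hence "inverse f = 0" "inverse (cf f) = 0" by (simp_all add: const_fr_hom)
  thus ?thesis by (simp only: cf_0)
next
  case False
  have "cf f * cf (inverse f) = 1" using inverse_mult_eq_1'[OF False] by (simp flip: cf_mult)
  thus ?thesis by (simp add: fps_inverse_unique)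
qed

lemma ev_cf[simp]: "ev (cf f) = f" by (rule fps_ext) simp
lemma at0_eq: "at0 F = cf (ev F)" by (simp add: at0_def cf_def ev_def)

lemma reg_add: "reg F \<Longrightarrow> reg G \<Longrightarrow> reg (F + G)" by (simp add: reg_def regular0_add)
lemma reg_mult: "reg F \<Longrightarrow> reg G \<Longrightarrow> reg (F * G)"
  by (simp add: reg_def fps_mult_nth regular0_sum regular0_mult)
lemma reg_cf[simp]: "reg (cf f)" by (simp add: reg_def)
lemma reg_0[simp]: "reg 0" by (simp add: reg_def)
lemma reg_const[simp]: "regular0 c \<Longrightarrow> reg (fps_const c)" by (simp add: reg_def fps_const_def)
lemma reg_X[simp]: "reg fps_X" by (simp add: reg_def fps_X_def)
lemma reg_XD: "reg F \<Longrightarrow> reg (fps_X * fps_deriv F)"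
  by (auto simp add: reg_def regular0_mult simp del: of_nat_Suc)
lemma reg_th: "reg F \<Longrightarrow> reg (th F)"
  by (simp add: th_def reg_add reg_mult reg_XD)

lemma ev_add: "reg F \<Longrightarrow> reg G \<Longrightarrow> ev (F + G) = ev F + ev G"
  by (rule fps_ext) (simp add: reg_def regular0_add)
lemma ev_mult: "reg F \<Longrightarrow> reg G \<Longrightarrow> ev (F * G) = ev F * ev G"
  by (rule fps_ext) (simp add: reg_def fps_mult_nth regular0_sum regular0_mult)
lemma ev_w: "reg F \<Longrightarrow> ev (fps_const wvar * F) = 0"
  by (rule fps_ext) (simp add: reg_def regular0_mult)

lemma XD_nth: "(fps_X * fps_deriv f) $  d = of_nat d * f $  d"
  by (cases d) (simp_all del: of_nat_Suc)
lemma th_nth: "th X $  d = (wvar + of_nat d) * X $  d"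
  by (simp add: th_def XD_nth algebra_simps)
lemma th_add: "th (X + Y) = th X + th Y" by (simp add: th_def algebra_simps)
lemma th_0[simp]: "th 0 = 0" by (simp add: th_def)
lemma th_mult: "th (f * X) = f * th X + (fps_X * fps_deriv f) * X"
  by (simp add: th_def algebra_simps)
lemma th_w: "th (fps_const wvar * X) = fps_const wvar * th X"
  by (simp add: th_def algebra_simps)
lemma th_pow_nth: "((th ^^ j) X) $  d = (wvar + of_nat d) ^ j * X $  d"
  by (induct j) (simp_all add: th_nth)

lemma wvar_nz[simp]: "wvar \<noteq> 0" by (simp add: wvar_emb)


definition nG :: "ser \<Rightarrow> ser" where "nG F = F * cf (inverse (ev F))"

lemma Mop_eq: "Mop F = nG F + fps_const (inverse wvar) * (fps_X * fps_deriv (nG F))"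
  by (simp add: Mop_def Let_def at0_eq nG_def cf_inverse)

lemma Pset_reg: "F \<in> Pset \<Longrightarrow> reg F" by (simp add: Pset_def reg_def)
lemma Pset_ev0: "F \<in> Pset \<Longrightarrow> ev F $ 0 = 1" by (simp add: Pset_def)

lemma nG_reg: "F \<in> Pset \<Longrightarrow> reg (nG F)" by (simp add: nG_def reg_mult Pset_reg)
lemma nG_ev: "F \<in> Pset \<Longrightarrow> ev (nG F) = 1"
  using Pset_ev0[of F] by (simp add: nG_def ev_mult Pset_reg inverse_mult_eq_1')
lemma nG_F: "F \<in> Pset \<Longrightarrow> cf (ev F) * nG F = F"
proof -
  assume F: "F \<in> Pset"
  have "cf (ev F) * nG F = F * cf (ev F * inverse (ev F))" by (simp add: nG_def algebra_simps)
  also have "\<dots> = F" using Pset_ev0[OF F] by (simp add: inverse_mult_eq_1')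
  finally show ?thesis .
qed
lemma th_nG: "th (nG F) = fps_const wvar * Mop F"
proof -
  have c: "fps_const wvar * fps_const (inverse wvar) = 1" by simp
  show ?thesis unfolding Mop_eq th_def distrib_left mult.assoc[symmetric] c by simp
qed

lemma Mop_nth: "Mop F $ d = nG F $ d + inverse wvar * (of_nat d * nG F $ d)"
  by (simp add: Mop_eq XD_nth)

lemma Mop_Pset: assumes F: "F \<in> Pset" shows "Mop F \<in> Pset"
proof -
  have r: "reg (nG F)" and e: "ev (nG F) = 1" using nG_reg[OF F] nG_ev[OF F] by auto
  have e0: "eval0 (nG F $ d) = (if d = 0 then 1 else 0)" for d
    using arg_cong[OF e, of "\<lambda>f. f $ d"] by simp
  have r0: "regular0 (nG F $ d)" for d using r by (simp add: reg_def)
  have "nG F $ 0 = 1"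
  proof -
    have "nG F $ 0 = F $ 0 * const_fr (inverse (ev F $ 0))" by (simp add: nG_def)
    thus ?thesis using F by (simp add: Pset_def const_fr_hom)
  qed
  moreover have "regular0 (Mop F $ d)" for d
    unfolding Mop_nth
  proof (rule conjunct1[OF regular0_add[OF r0]])
    show "regular0 (inverse wvar * (of_nat d * nG F $ d))"
      by (rule regular0_divw) (use regular0_mult[OF regular0_of_nat r0, of d] e0[of d] in auto)
  qed
  ultimately show ?thesis by (simp add: Pset_def Mop_nth)
qed

lemma Mop_scale: assumes F: "F \<in> Pset" and hF: "cf h * F \<in> Pset" shows "Mop (cf h * F) = Mop F"
proof -
  have h0: "h $ 0 \<noteq> 0"
  proof
    assume "h $ 0 = 0"
    hence "(cf h * F) $ 0 = 0" by (simp add: const_fr_hom)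
    moreover have "(cf h * F) $ 0 = 1" using hF unfolding Pset_def by blast
    ultimately show False by (metis zero_neq_one)
  qed
  have "nG (cf h * F) = nG F"
    using h0 by (simp add: nG_def ev_mult Pset_reg[OF F] fps_inverse_mult algebra_simps
        flip: cf_mult cf_inverse) (simp add: mult.assoc[symmetric] inverse_mult_eq_1')
  thus ?thesis by (simp add: Mop_eq)
qed

inductive OP :: "nat \<Rightarrow> (ser \<Rightarrow> ser) \<Rightarrow> bool" where
  z: "OP m (\<lambda>X. 0)"
| c: "OP 0 (\<lambda>X. cf f * X)"
| a: "OP m P \<Longrightarrow> OP m Q \<Longrightarrow> OP m (\<lambda>X. P X + Q X)"
| l: "OP m P \<Longrightarrow> OP m (\<lambda>X. cf f * P X)"
| t: "OP m P \<Longrightarrow> OP (Suc m) (\<lambda>X. th (P X))"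
| s: "OP m P \<Longrightarrow> OP (Suc m) P"

lemma op0: "OP m P \<Longrightarrow> m = 0 \<Longrightarrow> \<exists>f. P = (\<lambda>X. cf f * X)"
proof (induct rule: OP.induct)
  case (z m) thus ?case by (intro exI[of _ 0]) simp
next
  case (c f) thus ?case by blast
next
  case (a m P Q)
  then obtain f g where "P = (\<lambda>X. cf f * X)" "Q = (\<lambda>X. cf g * X)" by blast
  thus ?case by (intro exI[of _ "f + g"]) (simp add: algebra_simps)
next
  case (l m P f)
  then obtain g where "P = (\<lambda>X. cf g * X)" by blast
  thus ?case by (intro exI[of _ "f * g"]) (simp add: algebra_simps)
qed auto

lemma op_reg: "OP m P \<Longrightarrow> reg X \<Longrightarrow> reg (P X)"
  by (induct rule: OP.induct) (auto intro: reg_add reg_mult reg_th)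

lemma op_w: "OP m P \<Longrightarrow> P (fps_const wvar * X) = fps_const wvar * P X"
  by (induct rule: OP.induct) (auto simp: th_w mult.left_commute distrib_left)

lemma op_mono: "OP k P \<Longrightarrow> k \<le> m \<Longrightarrow> OP m P"
proof (induct m)
  case (Suc m) thus ?case by (cases "k = Suc m") (auto intro: OP.s)
qed auto

lemma rdiv: "OP k P \<Longrightarrow> \<exists>P1 r. (if k = 0 then P1 = (\<lambda>_. 0) else OP (k - 1) P1) \<and>
    (\<forall>X. P (cf i * X) = P1 (th X) + cf r * X)"
proof (induct rule: OP.induct)
  case (z m) thus ?case by (intro exI[of _ "\<lambda>_. 0"] exI[of _ 0]) (auto intro: OP.z)
next
  case (c f) thus ?case by (intro exI[of _ "\<lambda>_. 0"] exI[of _ "f * i"]) auto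
next
  case (a m P Q)
  then obtain P1 r Q1 r' where h: "if m = 0 then P1 = (\<lambda>_. 0) else OP (m - 1) P1"
    "\<forall>X. P (cf i * X) = P1 (th X) + cf r * X"
    "if m = 0 then Q1 = (\<lambda>_. 0) else OP (m - 1) Q1"
    "\<forall>X. Q (cf i * X) = Q1 (th X) + cf r' * X" by blast
  have o: "if m = 0 then (\<lambda>X. P1 X + Q1 X) = (\<lambda>_. 0) else OP (m - 1) (\<lambda>X. P1 X + Q1 X)"
  proof (cases "m = 0")
    case True thus ?thesis using h(1,3) by simp
  next
    case False thus ?thesis using h(1,3) by (simp add: OP.a)
  qed
  have e: "\<forall>X. P (cf i * X) + Q (cf i * X) = (P1 (th X) + Q1 (th X)) + cf (r + r') * X"
    using h(2,4) by (simp add: distrib_right add_ac)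
  show ?case using o e by blast
next
  case (l m P f)
  then obtain P1 r where h: "if m = 0 then P1 = (\<lambda>_. 0) else OP (m - 1) P1"
    "\<forall>X. P (cf i * X) = P1 (th X) + cf r * X" by blast
  have o: "if m = 0 then (\<lambda>X. cf f * P1 X) = (\<lambda>_. 0) else OP (m - 1) (\<lambda>X. cf f * P1 X)"
  proof (cases "m = 0")
    case True thus ?thesis using h(1) by simp
  next
    case False thus ?thesis using h(1) by (simp add: OP.l)
  qed
  have e: "\<forall>X. cf f * P (cf i * X) = cf f * P1 (th X) + cf (f * r) * X"
    using h(2) by (simp add: distrib_left mult.assoc)
  show ?case using o e by blast
next
  case (t m P)
  then obtain P1 r where h: "if m = 0 then P1 = (\<lambda>_. 0) else OP (m - 1) P1"
    "\<forall>X. P (cf i * X) = P1 (th X) + cf r * X" by blast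
  have o: "OP m (\<lambda>X. th (P1 X) + cf r * X)"
  proof (cases "m = 0")
    case True thus ?thesis using h(1) by (simp add: OP.c)
  next
    case False
    hence "OP m (\<lambda>X. th (P1 X))" using h(1) OP.t[of "m - 1" P1] by simp
    moreover have "OP m (\<lambda>X. cf r * X)" by (rule op_mono[OF OP.c]) simp
    ultimately show ?thesis by (rule OP.a)
  qed
  show ?case
    by (rule exI[of _ "\<lambda>X. th (P1 X) + cf r * X"], rule exI[of _ "fps_X * fps_deriv r"])
       (use h o in \<open>auto simp: th_add th_mult add.assoc\<close>)
next
  case (s m P)
  then obtain P1 r where h: "if m = 0 then P1 = (\<lambda>_. 0) else OP (m - 1) P1"
    "\<forall>X. P (cf i * X) = P1 (th X) + cf r * X" by blast
  have "OP m P1" using h(1) by (cases "m = 0") (auto intro: OP.z op_mono)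
  thus ?case using h(2) by auto
qed

lemma chain: "F \<in> Pset \<Longrightarrow> OP m P \<Longrightarrow> reg E \<Longrightarrow> P F = fps_const (wvar ^ m) * E \<Longrightarrow>
   \<exists>h. E = cf h * (Mop ^^ m) F"
proof (induct m arbitrary: F P)
  case 0
  then obtain f where "P = (\<lambda>X. cf f * X)" using op0 by blast
  thus ?case using 0 by auto
next
  case (Suc m)
  note F = Suc.prems(1)
  obtain P1 r where h: "OP m P1" "\<forall>X. P (cf (ev F) * X) = P1 (th X) + cf r * X"
    using rdiv[OF Suc.prems(2), of "ev F"] by auto
  have MF: "Mop F \<in> Pset" by (rule Mop_Pset[OF F])
  have rP: "reg (P1 (Mop F))" by (rule op_reg[OF h(1) Pset_reg[OF MF]])
  have eq: "fps_const wvar * (fps_const (wvar ^ m) * E) = fps_const wvar * P1 (Mop F) + cf r * nG F"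
  proof -
    have "P F = P (cf (ev F) * nG F)" using nG_F[OF F] by simp
    also have "\<dots> = P1 (fps_const wvar * Mop F) + cf r * nG F" using h(2) th_nG by simp
    also have "\<dots> = fps_const wvar * P1 (Mop F) + cf r * nG F" using op_w[OF h(1)] by simp
    finally show ?thesis using Suc.prems(4) by (simp add: algebra_simps fps_const_mult[symmetric] del: fps_const_mult)
  qed
  have "ev (fps_const wvar * (fps_const (wvar ^ m) * E)) = 0"
    by (rule ev_w) (rule reg_mult, rule reg_const, simp add: wvar_emb emb_power[symmetric], rule Suc.prems(3))
  moreover have "ev (fps_const wvar * P1 (Mop F) + cf r * nG F) = r"
  proof -
    have "ev (fps_const wvar * P1 (Mop F) + cf r * nG F) = ev (fps_const wvar * P1 (Mop F)) + ev (cf r * nG F)"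
      by (rule ev_add) (use rP nG_reg[OF F] in \<open>auto intro: reg_mult\<close>)
    also have "\<dots> = ev (cf r) * ev (nG F)" using ev_w[OF rP] ev_mult[OF reg_cf nG_reg[OF F]] by simp
    finally show ?thesis using nG_ev[OF F] by simp
  qed
  ultimately have "r = 0" using eq by simp
  hence "P1 (Mop F) = fps_const (wvar ^ m) * E" using eq by simp
  from Suc.hyps[OF MF h(1) Suc.prems(3) this] obtain g where "E = cf g * (Mop ^^ m) (Mop F)" by blast
  moreover have "(Mop ^^ Suc m) F = (Mop ^^ m) (Mop F)" by (simp only: funpow_Suc_right comp_apply)
  ultimately show ?case by metis
qed


definition opp :: "rat poly \<Rightarrow> ser \<Rightarrow> ser" where
  "opp p X = Abs_fps (\<lambda>d. emb (pcompose p [:of_nat d, 1:]) * X $ d)"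

lemma emb_lin: "emb [:of_nat d, 1:] = wvar + of_nat d"
proof -
  have "[:of_nat d, 1:] = [:0,1:] + (of_nat d :: rat poly)" by (simp add: of_nat_poly)
  thus ?thesis by (simp add: wvar_emb emb_add)
qed

lemma opp_OP: "OP (degree p) (opp p)"
proof (induct p rule: pCons_induct)
  case 0
  have "opp 0 = (\<lambda>X. 0)" by (rule ext, rule fps_ext) (simp add: opp_def)
  thus ?case by (simp add: OP.z)
next
  case (pCons c p)
  have e: "opp (pCons c p) = (\<lambda>X. cf (fps_const c) * X + th (opp p X))"
  proof (rule ext, rule fps_ext)
    fix X :: ser and d
    have h: "emb (pcompose (pCons c p) [:of_nat d,1:]) = const_fr c + (wvar + of_nat d) * emb (pcompose p [:of_nat d,1:])"
      by (simp only: pcompose_pCons emb_add emb_mult emb_lin const_fr_emb)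
    show "opp (pCons c p) X $ d = (cf (fps_const c) * X + th (opp p X)) $ d"
      by (simp add: opp_def h th_nth algebra_simps)
  qed
  show ?case
  proof (cases "p = 0")
    case True
    have "opp (pCons c p) = (\<lambda>X. cf (fps_const c) * X)" unfolding e True
      by (rule ext, rule fps_ext) (simp add: opp_def const_fr_emb)
    thus ?thesis using True OP.c[of "fps_const c"] by simp
  next
    case False
    have "OP (Suc (degree p)) (\<lambda>X. cf (fps_const c) * X)" by (rule op_mono[OF OP.c]) simp
    moreover have "OP (Suc (degree p)) (\<lambda>X. th (opp p X))" by (rule OP.t[OF pCons(2)])
    ultimately show ?thesis unfolding e using False by (simp add: OP.a)
  qed
qed

lemma th_pow_OP: "OP j (th ^^ j)"
proof (induct j)
  case 0
  have "(th ^^ 0) = (\<lambda>X. cf 1 * X)" by auto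
  thus ?case by (simp only: OP.c)
next
  case (Suc j)
  have "(th ^^ Suc j) = (\<lambda>X. th ((th ^^ j) X))" by auto
  thus ?case using OP.t[OF Suc] by simp
qed

definition numP :: "nat \<Rightarrow> (nat \<Rightarrow> nat) \<Rightarrow> nat \<Rightarrow> rat poly" where
  "numP l a d = (\<Prod>k=1..l. \<Prod>r=1..a k * d. [:of_nat r, of_nat (a k):])"
definition denP :: "nat \<Rightarrow> nat \<Rightarrow> rat poly" where
  "denP n d = (\<Prod>r=1..d. [:of_nat r, 1:] ^ n - [:0, 1:] ^ n)"
definition Apoly :: "nat \<Rightarrow> (nat \<Rightarrow> nat) \<Rightarrow> rat poly" where
  "Apoly l a = (\<Prod>k=1..l. \<Prod>s=1..a k. [:of_nat s, of_nat (a k):])"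

lemma calF_nth: "calF l a n $ d = emb (numP l a d) / emb (denP n d)"
  by (simp add: calF_def numP_def denP_def Fract_emb)

lemma numP_Suc: "numP l a (Suc e) = numP l a e * pcompose (Apoly l a) [:of_nat e, 1:]"
proof -
  have inner: "(\<Prod>r=1..a k * Suc e. [:of_nat r, of_nat (a k):]) =
      (\<Prod>r=1..a k * e. [:of_nat r, of_nat (a k):] :: rat poly) *
      (\<Prod>s=1..a k. [:of_nat (a k * e + s), of_nat (a k):])" for k
  proof -
    have "(\<Prod>r=1..a k * e + a k. [:of_nat r, of_nat (a k):] :: rat poly) =
      (\<Prod>r=1..a k * e. [:of_nat r, of_nat (a k):]) * (\<Prod>r=a k * e + 1..a k * e + a k. [:of_nat r, of_nat (a k):])"
      by (rule prod.ub_add_nat) simp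
    also have "(\<Prod>r=a k * e + 1..a k * e + a k. [:of_nat r, of_nat (a k):] :: rat poly) =
       (\<Prod>s=1..a k. [:of_nat (a k * e + s), of_nat (a k):])"
      using prod.shift_bounds_cl_nat_ivl[of "\<lambda>r. [:of_nat r, of_nat (a k):] :: rat poly" 1 "a k * e" "a k"]
      by (simp add: add.commute)
    finally show ?thesis by (simp add: mult_Suc_right add.commute)
  qed
  have comp: "pcompose [:of_nat s, of_nat b:] [:of_nat e, 1:] = ([:of_nat (b * e + s), of_nat b:] :: rat poly)" for s b
    by (simp add: pcompose_pCons algebra_simps)
  show ?thesis
    unfolding numP_def Apoly_def pcompose_prod inner prod.distrib comp ..
qed

lemma denP_Suc: "denP n (Suc e) = denP n e * ([:of_nat (Suc e), 1:] ^ n - [:0, 1:] ^ n)"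
  by (simp add: denP_def)

lemma denP_0: "n \<ge> 1 \<Longrightarrow> poly (denP n d) 0 \<noteq> 0"
  by (simp add: denP_def poly_prod zero_power)

lemma numP_0[simp]: "numP l a 0 = 1" and denP_0'[simp]: "denP n 0 = 1"
  by (simp_all add: numP_def denP_def)

lemma calF_Pset: "n \<ge> 1 \<Longrightarrow> calF l a n \<in> Pset"
  unfolding Pset_def using denP_0 by (auto simp: calF_nth regular0_iff)


definition Bpoly :: "nat \<Rightarrow> (nat \<Rightarrow> nat) \<Rightarrow> rat poly" where
  "Bpoly l a = Apoly l a div [:1,1:]"

lemma Apoly_B: assumes "l \<ge> 1" "a 1 \<ge> 1" shows "Apoly l a = [:1,1:] * Bpoly l a"
proof -
  have "poly (Apoly l a) (-1) = 0"
  proof -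
    have i: "(\<Prod>s=1..a 1. poly [:of_nat s, of_nat (a 1):] (-1::rat)) = 0"
      by (rule prod_zero_iff[THEN iffD2]) (use assms in \<open>auto intro!: bexI[of _ "a 1"]\<close>)
    have "(\<Prod>k=1..l. \<Prod>s=1..a k. poly [:of_nat s, of_nat (a k):] (-1::rat)) = 0"
      by (rule prod_zero_iff[THEN iffD2]) (use i assms in \<open>auto intro!: bexI[of _ 1]\<close>)
    thus ?thesis unfolding Apoly_def poly_prod .
  qed
  hence "[:1,1:] dvd Apoly l a" using poly_eq_0_iff_dvd[of "Apoly l a" "-1"] by simp
  thus ?thesis unfolding Bpoly_def by (rule dvd_mult_div_cancel[symmetric])
qed

lemma Apoly_nz: "Apoly l a \<noteq> 0"
  by (auto simp: Apoly_def)

lemma Apoly_deg: "degree (Apoly l a) \<le> (\<Sum>k=1..l. a k)"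
proof -
  have "degree (Apoly l a) \<le> (\<Sum>k=1..l. degree (\<Prod>s=1..a k. [:of_nat s, of_nat (a k):] :: rat poly))"
    unfolding Apoly_def using degree_prod_sum_le[of "{1..l}"] by (simp add: o_def)
  also have "\<dots> \<le> (\<Sum>k=1..l. a k)"
  proof (rule sum_mono)
    fix k
    have "degree (\<Prod>s=1..a k. [:of_nat s, of_nat (a k):] :: rat poly) \<le> (\<Sum>s=1..a k. degree ([:of_nat s, of_nat (a k):] :: rat poly))"
      using degree_prod_sum_le[of "{1..a k}" "\<lambda>s. [:of_nat s, of_nat (a k):] :: rat poly"] by (simp add: o_def)
    also have "\<dots> \<le> (\<Sum>s=1..a k. 1)" by (rule sum_mono) simp
    finally show "degree (\<Prod>s=1..a k. [:of_nat s, of_nat (a k):] :: rat poly) \<le> a k" by simp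
  qed
  finally show ?thesis .
qed

lemma Bpoly_deg: assumes "l \<ge> 1" "a 1 \<ge> 1" "(\<Sum>k=1..l. a k) = n" shows "degree (Bpoly l a) \<le> n - 1"
proof -
  have A: "Apoly l a = [:1,1:] * Bpoly l a" by (rule Apoly_B[of l a, OF assms(1,2)])
  hence "Bpoly l a \<noteq> 0" using Apoly_nz[of l a] by auto
  hence "degree (Apoly l a) = 1 + degree (Bpoly l a)" unfolding A by (subst degree_mult_eq) auto
  thus ?thesis using Apoly_deg[of l a] assms(3) by simp
qed

definition Ecal :: "nat \<Rightarrow> (nat \<Rightarrow> nat) \<Rightarrow> nat \<Rightarrow> ser" where
  "Ecal l a n = Abs_fps (\<lambda>d. wvar * calF l a n $ d / (wvar + of_nat d))"

lemma wd_nz[simp]: "wvar + of_nat d \<noteq> 0"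
  using emb_lin[of d] by (metis emb_eq_0_iff pCons_eq_0_iff one_neq_zero)

lemma wd_nz'[simp]: "wvar + (1 + of_nat d) \<noteq> 0" using wd_nz[of "Suc d"] by simp

lemma calF0: "calF l a n $ 0 = 1" by (simp add: calF_nth)

lemma Ecal_nth: "Ecal l a n $ d = wvar * calF l a n $ d / (wvar + of_nat d)"
  by (simp add: Ecal_def)

lemma Ecal_prop: assumes "n \<ge> 1"
  shows "Ecal l a n \<in> Pset" "ev (Ecal l a n) = 1"
proof -
  have F: "calF l a n \<in> Pset" by (rule calF_Pset[OF assms])
  have r: "regular0 (Ecal l a n $ d) \<and> eval0 (Ecal l a n $ d) = (if d = 0 then 1 else 0)" for d
  proof (cases "d = 0")
    case True thus ?thesis by (simp add: Ecal_nth calF0)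
  next
    case False
    have r1: "regular0 (wvar + of_nat d) \<and> eval0 (wvar + of_nat d) = of_nat d"
      using regular0_add[of wvar "of_nat d"] by simp
    have rd: "regular0 (inverse (wvar + of_nat d))"
      using regular0_inverse[of "wvar + of_nat d"] r1 False by simp
    have rF: "regular0 (calF l a n $ d)" using F by (simp add: Pset_def)
    have e: "Ecal l a n $ d = wvar * (calF l a n $ d * inverse (wvar + of_nat d))"
      by (simp add: Ecal_nth divide_inverse)
    have "regular0 (calF l a n $ d * inverse (wvar + of_nat d))" using regular0_mult[OF rF rd] by simp
    thus ?thesis unfolding e using regular0_mult[OF regular0_wvar] False by simp
  qed
  show "Ecal l a n \<in> Pset" using r by (simp add: Pset_def) (metis r eval0_1 regular0_1 Ecal_nth calF0 wvar_nz mult_1_right of_nat_0 add_0_right divide_self)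
  show "ev (Ecal l a n) = 1" by (rule fps_ext) (simp add: r)
qed

lemma Mop_Ecal: assumes "n \<ge> 1" shows "Mop (Ecal l a n) = calF l a n"
proof -
  have "nG (Ecal l a n) = Ecal l a n" using Ecal_prop(2)[OF assms] by (simp add: nG_def)
  moreover have "x + inverse wvar * (of_nat d * x) = (wvar + of_nat d) / wvar * x" for x d
    by (simp add: field_simps)
  moreover have "(wvar + of_nat d) / wvar * (wvar * y / (wvar + of_nat d)) = y" for y d
    using wd_nz[of d] by simp
  ultimately show ?thesis by (intro fps_ext) (simp only: Mop_nth Ecal_nth)
qed

definition Lop :: "nat \<Rightarrow> (nat \<Rightarrow> nat) \<Rightarrow> nat \<Rightarrow> ser \<Rightarrow> ser" where
  "Lop l a n X = (th ^^ (n - 1)) X + cf (- fps_X) * opp (Bpoly l a) X"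

lemma Lop_OP: assumes "l \<ge> 1" "a 1 \<ge> 1" "(\<Sum>k=1..l. a k) = n" shows "OP (n - 1) (Lop l a n)"
proof -
  have "OP (n - 1) (\<lambda>X. cf (- fps_X) * opp (Bpoly l a) X)"
    by (rule OP.l, rule op_mono[OF opp_OP Bpoly_deg[OF assms]])
  hence "OP (n - 1) (\<lambda>X. (th ^^ (n - 1)) X + cf (- fps_X) * opp (Bpoly l a) X)"
    using OP.a[OF th_pow_OP] by blast
  thus ?thesis unfolding Lop_def[abs_def] by simp
qed

lemma Lop_eq: assumes "l \<ge> 1" "a 1 \<ge> 1" "n \<ge> 1"
  shows "Lop l a n (calF l a n) = fps_const (wvar ^ (n - 1)) * Ecal l a n"
proof (rule fps_ext)
  fix d
  obtain m where nm: "n = Suc m" using assms(3) by (cases n) auto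
  show "Lop l a n (calF l a n) $ d = (fps_const (wvar ^ (n - 1)) * Ecal l a n) $ d"
  proof (cases d)
    case 0 thus ?thesis by (simp add: Lop_def th_pow_nth calF0 Ecal_nth)
  next
    case (Suc e)
    define u where "u = wvar + of_nat (Suc e)"
    define N where "N = emb (numP l a e)"
    define D where "D = emb (denP n e)"
    define Bv where "Bv = emb (pcompose (Bpoly l a) [:of_nat e, 1:])"
    have u: "u \<noteq> 0" unfolding u_def by (rule wd_nz)
    have D: "D \<noteq> 0" using denP_0[OF assms(3), of e] by (auto simp: D_def)
    have Dd: "[:of_nat (Suc e), 1:] ^ n - [:0, 1:] ^ n \<noteq> (0 :: rat poly)"
    proof
      assume "[:of_nat (Suc e), 1:] ^ n - [:0, 1:] ^ n = (0 :: rat poly)"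
      hence "poly ([:of_nat (Suc e), 1:] ^ n - [:0, 1:] ^ n :: rat poly) 0 = 0" by simp
      thus False using assms(3) by (simp add: zero_power)
    qed
    have eDd: "emb ([:of_nat (Suc e), 1:] ^ n - [:0, 1:] ^ n) = u ^ n - wvar ^ n"
      by (simp only: u_def emb_diff emb_power emb_lin wvar_emb)
    have un: "u ^ n - wvar ^ n \<noteq> 0" using Dd eDd by (metis emb_eq_0_iff)
    have pA: "pcompose (Apoly l a) [:of_nat e, 1:] = [:of_nat (Suc e), 1:] * pcompose (Bpoly l a) [:of_nat e, 1:]"
      unfolding Apoly_B[of l a, OF assms(1,2)] pcompose_mult by (simp add: pcompose_pCons)
    have F1: "calF l a n $ Suc e = N * u * Bv / (D * (u ^ n - wvar ^ n))"
    proof -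
      have "calF l a n $ Suc e = emb (numP l a e * ([:of_nat (Suc e), 1:] * pcompose (Bpoly l a) [:of_nat e, 1:])) / emb (denP n e * ([:of_nat (Suc e), 1:] ^ n - [:0, 1:] ^ n))"
        by (simp only: calF_nth numP_Suc denP_Suc pA)
      also have "\<dots> = N * u * Bv / (D * (u ^ n - wvar ^ n))"
        unfolding emb_mult eDd emb_lin u_def[symmetric] N_def D_def Bv_def by (simp only: mult.assoc)
      finally show ?thesis .
    qed
    have F0: "calF l a n $ e = N / D" by (simp add: calF_nth N_def D_def)
    have L: "Lop l a n (calF l a n) $ Suc e = u ^ (n - 1) * calF l a n $ Suc e - Bv * calF l a n $ e"
      by (simp add: Lop_def th_pow_nth u_def opp_def Bv_def)
    have R: "(fps_const (wvar ^ (n - 1)) * Ecal l a n) $ Suc e = wvar ^ (n - 1) * (wvar * calF l a n $ Suc e / u)"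
      by (simp add: Ecal_nth u_def)
    show ?thesis unfolding Suc L R F1 F0 using u D un unfolding nm
      by (simp add: field_simps)
  qed
qed


lemma funpow_Pset: "F \<in> Pset \<Longrightarrow> (Mop ^^ k) F \<in> Pset"
  by (induct k) (auto intro: Mop_Pset)

theorem lemma4p1:
  fixes n l :: nat and a :: "nat \<Rightarrow> nat"
  assumes "n \<ge> 2" and "l \<ge> 1"
    and "\<forall>k\<in>{1..l}. a k \<ge> 2"
    and "(\<Sum>k=1..l. a k) = n"
  shows "(Mop ^^ n) (calF l a n) = calF l a n"
proof -
  have n1: "n \<ge> 1" using assms(1) by simp
  have "1 \<in> {1..l}" using assms(2) by simp
  hence a1: "a 1 \<ge> 1" using assms(3) by force
  have F: "calF l a n \<in> Pset" by (rule calF_Pset[OF n1])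
  have EP: "Ecal l a n \<in> Pset" by (rule Ecal_prop(1)[OF n1])
  obtain h where h: "Ecal l a n = cf h * (Mop ^^ (n - 1)) (calF l a n)"
    using chain[OF F Lop_OP[of l a, OF assms(2) a1 assms(4)] Pset_reg[OF EP] Lop_eq[of l a n, OF assms(2) a1 n1]] by blast
  have F': "(Mop ^^ (n - 1)) (calF l a n) \<in> Pset" by (rule funpow_Pset[OF F])
  have "calF l a n = Mop (Ecal l a n)" by (rule Mop_Ecal[OF n1, symmetric])
  also have "\<dots> = Mop ((Mop ^^ (n - 1)) (calF l a n))"
    unfolding h by (rule Mop_scale[OF F']) (use EP h in simp)
  also have "\<dots> = (Mop ^^ n) (calF l a n)"
  proof -
    have "n = Suc (n - 1)" using n1 by simp
    hence "(Mop ^^ n) = Mop \<circ> (Mop ^^ (n - 1))" by (metis funpow.simps(2))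
    thus ?thesis by simp
  qed
  finally show ?thesis by simp
qed

end
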